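(* Let $R$ be an associative ring with identity. Suppose that at least one of the following two conditions holds: (1) for every $c \in R$ and every $x \in R$ such that $yx - 1 \in Rc$ for some $y \in R$, there exists a left unit $u \in R$ with $x - u \in Rc$; (2) for every $c \in R$ and every $x \in R$ such that $xy - 1 \in cR$ for some $y \in R$, there exists a right unit $u \in R$ with $x - u \in cR$. Then $R$ is directly finite, i.e. for all $a,b \in R$, $ab = 1$ implies $ba = 1$.
   Context: An element $u \in R$ is a left unit if there exists $v \in R$ with $vu = 1$, and a right unit if there exists $v \in R$ with $uv = 1$. Condition (1) is what the paper calls "every left unit lifts modulo every left principal ideal", and condition (2) is what it calls "every right unit lifts modulo every right principal ideal". *)

theory Defs
  imports Main
begin

definition left_unit :: "'a::ring_1 \<Rightarrow> bool" where
  "left_unit u \<longleftrightarrow> (\<exists>v. v * u = 1)"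

definition right_unit :: "'a::ring_1 \<Rightarrow> bool" where
  "right_unit u \<longleftrightarrow> (\<exists>v. u * v = 1)"

end

theory Submission
  imports Defs
begin

theorem lemma2:
  assumes "(\<forall>(c::'a::ring_1) x. (\<exists>y. \<exists>r. y * x - 1 = r * c) \<longrightarrow>
              (\<exists>u. left_unit u \<and> (\<exists>r. x - u = r * c)))
         \<or> (\<forall>(c::'a::ring_1) x. (\<exists>y. \<exists>r. x * y - 1 = c * r) \<longrightarrow>
              (\<exists>u. right_unit u \<and> (\<exists>r. x - u = c * r)))"
  shows "\<forall>a b :: 'a. a * b = 1 \<longrightarrow> b * a = 1"
proof (intro allI impI)
  fix a b :: 'a
  assume ab: "a * b = 1"
  define e where "e = 1 - b * a"
  have ae: "a * e = 0" unfolding e_def using ab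
    by (simp add: right_diff_distrib mult.assoc[symmetric])
  have eb: "e * b = 0" unfolding e_def using ab
    by (simp add: left_diff_distrib mult.assoc)
  from assms show "b * a = 1"
  proof
    assume H: "\<forall>(c::'a) x. (\<exists>y. \<exists>r. y * x - 1 = r * c) \<longrightarrow>
              (\<exists>u. left_unit u \<and> (\<exists>r. x - u = r * c))"
    have "\<exists>y. \<exists>r. y * a - 1 = r * e" by (rule exI[of _ b], rule exI[of _ "-1"], simp add: e_def)
    with H obtain u r where lu: "left_unit u" and ar: "a - u = r * e" by blast
    from lu obtain v where vu: "v * u = 1" unfolding left_unit_def by blast
    have u: "u = a - r * e" using ar by (simp add: algebra_simps)
    have ub: "u * b = 1" using ab eb by (simp add: u left_diff_distrib mult.assoc)
    have vb: "v = b" by (metis mult.assoc mult_1_left mult_1_right ub vu)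
    have "a = u" by (metis mult.assoc mult_1_left mult_1_right ab vu vb)
    thus ?thesis using vu vb by simp
  next
    assume H: "\<forall>(c::'a) x. (\<exists>y. \<exists>r. x * y - 1 = c * r) \<longrightarrow>
              (\<exists>u. right_unit u \<and> (\<exists>r. x - u = c * r))"
    have "\<exists>y. \<exists>r. b * y - 1 = e * r" by (rule exI[of _ a], rule exI[of _ "-1"], simp add: e_def)
    with H obtain u r where ru: "right_unit u" and br: "b - u = e * r" by blast
    from ru obtain w where uw: "u * w = 1" unfolding right_unit_def by blast
    have u: "u = b - e * r" using br by (simp add: algebra_simps)
    have au: "a * u = 1" using ab ae by (simp add: u right_diff_distrib mult.assoc[symmetric])
    have wa: "w = a" by (metis mult.assoc mult_1_left mult_1_right au uw)
    have "b = u" by (metis mult.assoc mult_1_left mult_1_right ab uw wa)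
    thus ?thesis using uw wa by simp
  qed
qed

end
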